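(* For every $m\ge0$ and $n\ge1$ there is a bijection between $Q_3(m,n)$ and $P_3(-m,n)$.
   Context: Partitions: $\lambda_1\ge\cdots\ge\lambda_\ell>0$, $\ell(\lambda)=\ell$, $\lambda_i=0$ for $i>\ell$, $s(\lambda)$ the smallest part with $s(\emptyset)=+\infty$. Rank $=\lambda_1-\ell$; rank-set $=[-\lambda_1,1-\lambda_2,\dots,\ell-1-\lambda_\ell,\ell,\ell+1,\dots]$. $Q(m,n)$: partitions of $n$ whose rank-set contains $m$; $P(-m,n)$: partitions of $n$ with rank $\ge-m$. $m$-Durfee rectangle symbol $(\alpha,\beta)_{(m+j)\times j}$ of $\lambda$: $j\ge0$ is the largest integer with $\lambda_{m+j}\ge j$; $\alpha$ is the conjugate of $(\lambda_1-j,\dots,\lambda_{m+j}-j)$ and $\beta=(\lambda_{m+j+1},\lambda_{m+j+2},\dots)$; $|\lambda|=|\alpha|+|\beta|+j(m+j)$. $Q_3(m,n)$ is the set of $\lambda\in Q(m,n)$ whose symbol has $j\ge1$, $\ell(\beta)-\ell(\alpha)\ge1$, $\alpha_1=m+j$ and $s(\beta)=1$. $P_3(-m,n)$ is the set of $\mu\in P(-m,n)$ whose symbol $(\gamma,\delta)_{(m+j')\times j'}$ has $j'\ge2$ and $\delta_1\le j'-2$. *)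

theory Defs
  imports Main "HOL-Library.Extended_Nat"
begin

definition is_partition :: "nat list \<Rightarrow> bool" where
  "is_partition xs \<longleftrightarrow> sorted_wrt (\<ge>) xs \<and> (\<forall>x\<in>set xs. 0 < x)"

definition partitions :: "nat \<Rightarrow> nat list set" where
  "partitions n = {xs. is_partition xs \<and> sum_list xs = n}"

text \<open>1-indexed parts, with lambda_i = 0 for i > l.\<close>
definition part :: "nat list \<Rightarrow> nat \<Rightarrow> nat" where
  "part xs i = (if 1 \<le> i \<and> i \<le> length xs then xs ! (i - 1) else 0)"

definition smallest_part :: "nat list \<Rightarrow> enat" where
  "smallest_part xs = (if xs = [] then \<infinity> else enat (Min (set xs)))"

definition rank :: "nat list \<Rightarrow> int" where
  "rank xs = int (part xs 1) - int (length xs)"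

definition rank_set :: "nat list \<Rightarrow> int set" where
  "rank_set xs = {int (i - 1) - int (part xs i) | i. 1 \<le> i \<and> i \<le> length xs}
                 \<union> {int k | k. length xs \<le> k}"

definition Q :: "nat \<Rightarrow> nat \<Rightarrow> nat list set" where
  "Q m n = {xs \<in> partitions n. int m \<in> rank_set xs}"

definition P_neg :: "nat \<Rightarrow> nat \<Rightarrow> nat list set" where
  "P_neg m n = {xs \<in> partitions n. rank xs \<ge> - int m}"

definition conjugate :: "nat list \<Rightarrow> nat list" where
  "conjugate xs = map (\<lambda>k. length (filter (\<lambda>x. k \<le> x) xs))
                      [1..<Suc (if xs = [] then 0 else Max (set xs))]"

definition durfee_j :: "nat \<Rightarrow> nat list \<Rightarrow> nat" where
  "durfee_j m xs = (GREATEST j. j \<le> part xs (m + j))"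

definition durfee_alpha :: "nat \<Rightarrow> nat list \<Rightarrow> nat list" where
  "durfee_alpha m xs = (let j = durfee_j m xs in
     conjugate (map (\<lambda>i. part xs i - j) [1..<Suc (m + j)]))"

definition durfee_beta :: "nat \<Rightarrow> nat list \<Rightarrow> nat list" where
  "durfee_beta m xs = drop (m + durfee_j m xs) xs"

definition Q3 :: "nat \<Rightarrow> nat \<Rightarrow> nat list set" where
  "Q3 m n = {xs \<in> Q m n.
     (let j = durfee_j m xs; a = durfee_alpha m xs; b = durfee_beta m xs in
       1 \<le> j \<and> int (length b) - int (length a) \<ge> 1 \<and> part a 1 = m + j
       \<and> smallest_part b = 1)}"

definition P3 :: "nat \<Rightarrow> nat \<Rightarrow> nat list set" where
  "P3 m n = {xs \<in> P_neg m n.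
     (let j = durfee_j m xs; d = durfee_beta m xs in
       2 \<le> j \<and> int (part d 1) \<le> int j - 2)}"

end

theory Submission
  imports Defs
begin

lemma part_mono:
  assumes "is_partition xs" "1 \<le> i" "i \<le> k"
  shows "part xs k \<le> part xs i"
proof (cases "k \<le> length xs")
  case True
  have s: "sorted_wrt (\<ge>) xs" using assms(1) by (simp add: is_partition_def)
  show ?thesis
  proof (cases "i = k")
    case False
    then have "xs ! (k-1) \<le> xs ! (i-1)" using s True assms(2,3)
      by (auto simp: sorted_wrt_iff_nth_less)
    then show ?thesis using True assms by (simp add: part_def)
  qed simp
next
  case False then show ?thesis by (simp add: part_def)
qed

lemma part_le_sum: "part xs i \<le> sum_list xs"
  by (auto simp: part_def intro!: member_le_sum_list)

lemma durfee_eq: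
  assumes "is_partition xs" "j \<le> part xs (m+j)" "part xs (m+j+1) < j+1"
  shows "durfee_j m xs = j"
  unfolding durfee_j_def
proof (rule Greatest_equality)
  show "j \<le> part xs (m+j)" by fact
  fix y assume y: "y \<le> part xs (m+y)"
  show "y \<le> j"
  proof (rule ccontr)
    assume "\<not> y \<le> j"
    then have "part xs (m+y) \<le> part xs (m+j+1)" by (intro part_mono assms(1)) auto
    then show False using y assms(3) \<open>\<not> y \<le> j\<close> by linarith
  qed
qed

lemma durfee_props:
  assumes "is_partition xs"
  shows "durfee_j m xs \<le> part xs (m + durfee_j m xs)"
    "part xs (m + durfee_j m xs + 1) < durfee_j m xs + 1"
proof -
  have b: "\<forall>y. y \<le> part xs (m+y) \<longrightarrow> y \<le> sum_list xs"
    using part_le_sum order_trans by blast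
  show "durfee_j m xs \<le> part xs (m + durfee_j m xs)"
    unfolding durfee_j_def by (rule GreatestI_nat[of _ 0]) (use b in auto)
  show "part xs (m + durfee_j m xs + 1) < durfee_j m xs + 1"
  proof (rule ccontr)
    assume "\<not> ?thesis"
    then have "durfee_j m xs + 1 \<le> part xs (m + (durfee_j m xs + 1))" by simp
    then have "durfee_j m xs + 1 \<le> durfee_j m xs"
      unfolding durfee_j_def by (rule Greatest_le_nat) (use b in auto)
    then show False by simp
  qed
qed

lemma map_part_prefix: "map (\<lambda>i. part (A @ R) i - j) [1..<Suc (length A)] = map (\<lambda>a. a - j) A"
  by (rule nth_equalityI) (auto simp: part_def nth_append simp del: upt_Suc)

lemma length_conj: "ys \<noteq> [] \<Longrightarrow> length (conjugate ys) = Max (set ys)"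
  by (simp add: conjugate_def)

lemma part_conj1: "part (conjugate ys) 1 = length (filter (\<lambda>x. 1 \<le> x) ys)"
proof (cases "ys = []")
  case True then show ?thesis by (simp add: part_def conjugate_def)
next
  case ne: False
  show ?thesis
  proof (cases "Max (set ys) = 0")
    case True
    then have "\<forall>x\<in>set ys. x = 0" by (metis List.finite_set Max_ge le_zero_eq)
    then show ?thesis using True ne by (auto simp: part_def conjugate_def simp del: upt_Suc intro!: filter_False)
  next
    case False
    then show ?thesis using ne by (auto simp: part_def conjugate_def simp del: upt_Suc)
  qed
qed

lemma sorted_hd_max: "sorted_wrt (\<ge>) (A::nat list) \<Longrightarrow> x \<in> set A \<Longrightarrow> x \<le> hd A"
  by (cases A) auto

lemma sorted_last_min: "sorted_wrt (\<ge>) (A::nat list) \<Longrightarrow> x \<in> set A \<Longrightarrow> last A \<le> x"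
proof (induction A)
  case (Cons a A) then show ?case
    by (cases "A = []") (auto dest: last_in_set)
qed simp

lemma part_app_mid: "part (A @ x # B) (Suc (length A)) = x"
  by (simp add: part_def nth_append)
lemma part_app_last: "A \<noteq> [] \<Longrightarrow> part (A @ R) (length A) = last A"
  by (cases A) (auto simp: part_def nth_append last_conv_nth)
lemma part_app_in: "1 \<le> i \<Longrightarrow> i \<le> length A \<Longrightarrow> part (A @ R) i = A ! (i - 1)"
  by (auto simp: part_def nth_append)

lemma max_shift: "A \<noteq> [] \<Longrightarrow> sorted_wrt (\<ge>) (A::nat list) \<Longrightarrow> Max (set (map (\<lambda>a. a - j) A)) = hd A - j"
  by (rule Max_eqI) (auto dest: sorted_hd_max)

definition QC where "QC m n A j B \<longleftrightarrow> is_partition (A @ j # B) \<and> sum_list (A @ j # B) = n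
  \<and> length A = m + j \<and> 1 \<le> j \<and> (\<forall>a\<in>set A. j < a) \<and> B \<noteq> [] \<and> last B = 1 \<and> hd A \<le> j + length B"

definition PC where "PC m n c C j D \<longleftrightarrow> is_partition (c # C @ D) \<and> sum_list (c # C @ D) = n
  \<and> Suc (length C) = m + j \<and> 2 \<le> j \<and> j \<le> last (c # C) \<and> (\<forall>d\<in>set D. d + 2 \<le> j) \<and> length D + j \<le> c"

lemma QC_Q3: assumes "QC m n A j B" shows "A @ j # B \<in> Q3 m n"
proof -
  let ?xs = "A @ j # B"
  have p: "is_partition ?xs" and s: "sum_list ?xs = n" and lA: "length A = m + j" and j1: "1 \<le> j"
    and Aj: "\<forall>a\<in>set A. j < a" and Bne: "B \<noteq> []" and lB: "last B = 1" and hA: "hd A \<le> j + length B"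
    using assms by (auto simp: QC_def)
  have Ane: "A \<noteq> []" using lA j1 by auto
  have sA: "sorted_wrt (\<ge>) A" using p by (simp add: is_partition_def sorted_wrt_append)
  have pos: "\<forall>x\<in>set ?xs. 0 < x" using p by (simp add: is_partition_def)
  have dj: "durfee_j m ?xs = j"
  proof (rule durfee_eq[OF p])
    show "j \<le> part ?xs (m + j)" using part_app_last[OF Ane, of "j # B"] lA Aj Ane
      by (metis last_in_set less_imp_le)
    show "part ?xs (m + j + 1) < j + 1" using part_app_mid[of A j B] lA by simp
  qed
  have beta: "durfee_beta m ?xs = j # B" using dj lA by (simp add: durfee_beta_def)
  have alpha: "durfee_alpha m ?xs = conjugate (map (\<lambda>a. a - j) A)"
    using dj lA map_part_prefix[of A "j # B" j] by (simp add: durfee_alpha_def Let_def)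
  have la: "length (durfee_alpha m ?xs) = hd A - j"
    using alpha length_conj[of "map (\<lambda>a. a - j) A"] Ane max_shift[OF Ane sA] by simp
  have pa: "part (durfee_alpha m ?xs) 1 = m + j"
  proof -
    have "filter (\<lambda>x. 1 \<le> x) (map (\<lambda>a. a - j) A) = map (\<lambda>a. a - j) A"
      using Aj by (force intro!: filter_True)
    then show ?thesis using alpha part_conj1 lA by simp
  qed
  have sm: "smallest_part (j # B) = 1"
  proof -
    have "Min (set (j # B)) = 1"
      apply (rule Min_eqI) using pos Bne lB by (auto dest: last_in_set simp: Suc_le_eq)
    then show ?thesis by (simp add: smallest_part_def one_enat_def)
  qed
  have rs: "int m \<in> rank_set ?xs"
    unfolding rank_set_def
    apply (rule UnI1) apply (rule CollectI)
    apply (rule exI[of _ "Suc (length A)"])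
    using part_app_mid[of A j B] lA by simp
  have "?xs \<in> Q m n" using p s rs by (simp add: Q_def partitions_def)
  then show ?thesis unfolding Q3_def using dj beta la pa sm j1 hA Aj Ane
    by (simp add: Let_def)
qed

lemma Q3_QC: assumes "xs \<in> Q3 m n" shows "\<exists>A j B. xs = A @ j # B \<and> QC m n A j B"
proof -
  define j where "j = durfee_j m xs"
  have p: "is_partition xs" and s: "sum_list xs = n" and rs: "int m \<in> rank_set xs"
    using assms by (auto simp: Q3_def Q_def partitions_def)
  have j1: "1 \<le> j" and lab: "int (length (durfee_beta m xs)) - int (length (durfee_alpha m xs)) \<ge> 1"
    and pa: "part (durfee_alpha m xs) 1 = m + j" and sm: "smallest_part (durfee_beta m xs) = 1"
    using assms by (auto simp: Q3_def Let_def j_def)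
  have P1: "j \<le> part xs (m + j)" and P2: "part xs (m + j + 1) < j + 1"
    using durfee_props[OF p, of m] by (simp_all add: j_def)
  have bne: "drop (m + j) xs \<noteq> []" using sm by (auto simp: durfee_beta_def smallest_part_def j_def)
  then have len: "m + j < length xs" by simp
  define A where "A = take (m + j) xs"
  define x where "x = xs ! (m + j)"
  define B where "B = drop (Suc (m + j)) xs"
  have xs: "xs = A @ x # B" unfolding A_def x_def B_def using len by (simp add: id_take_nth_drop)
  have lA: "length A = m + j" using len by (simp add: A_def)
  have Ane: "A \<noteq> []" using lA j1 by auto
  have sA: "sorted_wrt (\<ge>) A" and sxs: "sorted_wrt (\<ge>) xs" using p xs by (auto simp: is_partition_def sorted_wrt_append)
  have pos: "\<forall>y\<in>set xs. 0 < y" using p by (simp add: is_partition_def)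
  have beta: "durfee_beta m xs = x # B" using xs lA by (simp add: durfee_beta_def j_def)
  have alpha: "durfee_alpha m xs = conjugate (map (\<lambda>a. a - j) A)"
    using xs lA map_part_prefix[of A "x # B" j] by (simp add: durfee_alpha_def Let_def j_def)
  have la: "length (durfee_alpha m xs) = hd A - j"
    using alpha length_conj[of "map (\<lambda>a. a - j) A"] Ane max_shift[OF Ane sA] by simp
  have "length (filter (\<lambda>x. 1 \<le> x) (map (\<lambda>a. a - j) A)) = length (map (\<lambda>a. a - j) A)"
    using pa alpha part_conj1 lA by simp
  then have "\<forall>y\<in>set (map (\<lambda>a. a - j) A). 1 \<le> y"
    by (metis length_filter_less less_irrefl)
  then have Aj: "\<forall>a\<in>set A. j < a" by auto
  have hA0: "hd A - j \<le> length B" using lab la beta by simp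
  have hA: "hd A \<le> j + length B" using hA0 by linarith
  have x_le: "x \<le> j" using P2 part_app_mid[of A x B] xs lA by simp
  have rest: "\<forall>y\<in>set B. y \<le> x" using sxs xs by (simp add: sorted_wrt_append)
  have xj: "x = j"
  proof -
    have "\<not> length xs \<le> m" using len by simp
    then obtain i where i: "1 \<le> i" "i \<le> length xs" "int (i - 1) - int (part xs i) = int m"
      using rs unfolding rank_set_def by auto
    show ?thesis
    proof (cases "i \<le> m + j")
      case True
      have "part xs i = A ! (i - 1)" using part_app_in[of i A "x # B"] True i xs lA by simp
      moreover have "A ! (i - 1) \<in> set A" using True i lA by simp
      ultimately have "j < part xs i" using Aj by simp
      then show ?thesis using i True by linarith
    next
      case False
      then have "part xs i \<le> part xs (m + j + 1)" by (intro part_mono p) auto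
      then show ?thesis using i False x_le part_app_mid[of A x B] xs lA by simp
    qed
  qed
  have Bne: "B \<noteq> []"
  proof
    assume "B = []"
    then have "smallest_part [x] = 1" using sm beta by simp
    then have "x = 1" by (simp add: smallest_part_def one_enat_def)
    moreover have "hd A \<in> set A" using Ane by simp
    ultimately show False using hA Aj xj \<open>B = []\<close> by fastforce
  qed
  have lB: "last B = 1"
  proof -
    have sxB: "sorted_wrt (\<ge>) (x # B)" using sxs xs by (simp add: sorted_wrt_append)
    have lm: "\<forall>y\<in>set (x # B). last (x # B) \<le> y" using sorted_last_min[OF sxB] by blast
    have "Min (set (x # B)) = last (x # B)"
      apply (rule Min_eqI)
        apply simp
       apply (use lm in blast)
      by (metis last_in_set list.distinct(1))
    then show ?thesis using sm beta Bne by (simp add: smallest_part_def one_enat_def)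
  qed
  show ?thesis
    apply (rule exI[of _ A], rule exI[of _ j], rule exI[of _ B])
    using xs xj p s lA j1 Aj Bne lB hA by (simp add: QC_def)
qed

lemma PC_P3: assumes "PC m n c C j D" shows "c # C @ D \<in> P3 m n"
proof -
  let ?ys = "(c # C) @ D"
  have p: "is_partition ?ys" and s: "sum_list ?ys = n" and lC: "length (c # C) = m + j" and j2: "2 \<le> j"
    and lst: "j \<le> last (c # C)" and Dj: "\<forall>d\<in>set D. d + 2 \<le> j" and lD: "length D + j \<le> c"
    using assms by (auto simp: PC_def)
  have dj: "durfee_j m ?ys = j"
  proof (rule durfee_eq[OF p])
    show "j \<le> part ?ys (m + j)" using part_app_last[of "c # C" D] lC lst by simp
    show "part ?ys (m + j + 1) < j + 1"
    proof (cases D)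
      case Nil then show ?thesis using lC by (simp add: part_def)
    next
      case (Cons d D')
      then show ?thesis using part_app_mid[of "c # C" d D'] lC Dj by simp
    qed
  qed
  have beta: "durfee_beta m ?ys = D" using dj lC
    by (simp add: durfee_beta_def) (metis Cons_eq_appendI append_eq_conv_conj length_Cons)
  have pd: "int (part D 1) \<le> int j - 2"
    using Dj j2 by (cases D) (auto simp: part_def)
  have rk: "rank ?ys \<ge> - int m" using lD lC by (simp add: rank_def part_def)
  show ?thesis using p s rk dj beta pd j2
    by (simp add: P3_def P_neg_def partitions_def Let_def)
qed

lemma P3_PC: assumes "ys \<in> P3 m n" shows "\<exists>c C j D. ys = c # C @ D \<and> PC m n c C j D"
proof -
  define j where "j = durfee_j m ys"
  have p: "is_partition ys" and s: "sum_list ys = n" and rk: "rank ys \<ge> - int m"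
    using assms by (auto simp: P3_def P_neg_def partitions_def)
  have j2: "2 \<le> j" and pd: "int (part (drop (m + j) ys) 1) \<le> int j - 2"
    using assms by (auto simp: P3_def Let_def j_def durfee_beta_def)
  have P1: "j \<le> part ys (m + j)" using durfee_props[OF p, of m] by (simp add: j_def)
  then have len: "m + j \<le> length ys" using j2 by (auto simp: part_def split: if_splits)
  define T where "T = take (m + j) ys"
  define D where "D = drop (m + j) ys"
  have lT: "length T = m + j" using len by (simp add: T_def)
  have Tne: "T \<noteq> []" using lT j2 by auto
  define c where "c = hd T"
  define C where "C = tl T"
  have T: "T = c # C" using Tne by (simp add: c_def C_def)
  have ys: "ys = c # C @ D" using T by (metis T_def D_def append_take_drop_id append_Cons)
  have sD: "sorted_wrt (\<ge>) D" using p by (simp add: is_partition_def D_def sorted_wrt_drop)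
  have lst: "j \<le> last (c # C)" using P1 part_app_last[of T D] Tne lT ys T by simp
  have Dj: "\<forall>d\<in>set D. d + 2 \<le> j"
  proof
    fix d assume d: "d \<in> set D"
    then have "d \<le> hd D" using sorted_hd_max[OF sD] by simp
    moreover have "part D 1 = hd D" using d by (cases D) (auto simp: part_def)
    ultimately show "d + 2 \<le> j" using pd D_def by simp
  qed
  have lD: "length D + j \<le> c" using rk ys lT T by (simp add: rank_def part_def)
  show ?thesis
    apply (rule exI[of _ c], rule exI[of _ C], rule exI[of _ j], rule exI[of _ D])
    using ys p s lT T j2 lst Dj lD by (simp add: PC_def)
qed

definition fmap :: "nat \<Rightarrow> nat list \<Rightarrow> nat list" where
  "fmap m xs = (let j = durfee_j m xs in (length xs - m - 1) # take (m + j) xs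
      @ filter (\<lambda>x. 0 < x) (map (\<lambda>x. x - 1) (drop (Suc (m + j)) xs)))"

definition gmap :: "nat \<Rightarrow> nat list \<Rightarrow> nat list" where
  "gmap m ys = (let j = durfee_j m ys in tl (take (m + j) ys) @ (j - 1) # map Suc (drop (m + j) ys)
      @ replicate (hd ys - j - length (drop (m + j) ys) + 1) 1)"

lemma QC_dj: assumes "QC m n A j B" shows "durfee_j m (A @ j # B) = j"
proof (rule durfee_eq)
  have lA: "length A = m + j" and j1: "1 \<le> j" and Aj: "\<forall>a\<in>set A. j < a"
    using assms by (auto simp: QC_def)
  have Ane: "A \<noteq> []" using lA j1 by auto
  show "is_partition (A @ j # B)" using assms by (simp add: QC_def)
  show "j \<le> part (A @ j # B) (m + j)" using part_app_last[OF Ane, of "j # B"] lA Aj Ane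
    by (metis last_in_set less_imp_le)
  show "part (A @ j # B) (m + j + 1) < j + 1" using part_app_mid[of A j B] lA by simp
qed

lemma PC_dj: assumes "PC m n c C j D" shows "durfee_j m (c # C @ D) = j"
proof -
  let ?ys = "(c # C) @ D"
  have p: "is_partition ?ys" and lC: "length (c # C) = m + j"
    and lst: "j \<le> last (c # C)" and Dj: "\<forall>d\<in>set D. d + 2 \<le> j"
    using assms by (auto simp: PC_def)
  have "durfee_j m ?ys = j"
  proof (rule durfee_eq[OF p])
    show "j \<le> part ?ys (m + j)" using part_app_last[of "c # C" D] lC lst by simp
    show "part ?ys (m + j + 1) < j + 1"
    proof (cases D)
      case Nil then show ?thesis using lC by (simp add: part_def)
    next
      case (Cons d D')
      then show ?thesis using part_app_mid[of "c # C" d D'] lC Dj by simp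
    qed
  qed
  then show ?thesis by simp
qed

lemma f_eval: assumes "QC m n A j B"
  shows "fmap m (A @ j # B) = (j + length B) # A @ filter (\<lambda>x. 0 < x) (map (\<lambda>x. x - 1) B)"
proof -
  have lA: "length A = m + j" using assms by (simp add: QC_def)
  show ?thesis using QC_dj[OF assms] lA by (simp add: fmap_def Let_def)
qed

lemma g_eval: assumes "PC m n c C j D"
  shows "gmap m (c # C @ D) = C @ (j - 1) # map Suc D @ replicate (c - j - length D + 1) 1"
proof -
  have lC: "Suc (length C) = m + j" using assms by (simp add: PC_def)
  have t: "take (m + j) (c # C @ D) = c # C" using lC
    by (metis append_Cons append_eq_conv_conj length_Cons)
  have d: "drop (m + j) (c # C @ D) = D" using lC
    by (metis append_Cons append_eq_conv_conj length_Cons)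
  show ?thesis using PC_dj[OF assms] t d lC by (simp add: gmap_def Let_def del: length_drop)
qed

lemma sum_dec: "\<forall>x\<in>set B. 0 < (x::nat) \<Longrightarrow>
   sum_list (filter (\<lambda>x. 0 < x) (map (\<lambda>x. x - 1) B)) + length B = sum_list B"
  by (induction B) auto

lemma B_recon: "sorted_wrt (\<ge>) B \<Longrightarrow> \<forall>x\<in>set B. 0 < (x::nat) \<Longrightarrow>
  map Suc (filter (\<lambda>x. 0 < x) (map (\<lambda>x. x - 1) B))
   @ replicate (length B - length (filter (\<lambda>x. 0 < x) (map (\<lambda>x. x - 1) B))) 1 = B"
proof (induction B)
  case (Cons b B)
  show ?case
  proof (cases "b = 1")
    case True
    then have "\<forall>x\<in>set B. x = 1" using Cons.prems by fastforce
    then have "filter (\<lambda>x. 0 < x) (map (\<lambda>x. x - 1) B) = []" by (auto intro!: filter_False)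
    moreover have "replicate (length B) 1 = B" using \<open>\<forall>x\<in>set B. x = 1\<close>
      by (simp add: replicate_length_same)
    ultimately show ?thesis using True by simp
  next
    case False
    then have b2: "0 < b - 1" using Cons.prems by auto
    have l: "length (filter (\<lambda>x. 0 < x) (map (\<lambda>x. x - 1) B)) \<le> length B"
      by (metis length_filter_le length_map)
    have "Suc (length B) - Suc (length (filter (\<lambda>x. 0 < x) (map (\<lambda>x. x - 1) B)))
        = length B - length (filter (\<lambda>x. 0 < x) (map (\<lambda>x. x - 1) B))" by simp
    then show ?thesis using Cons b2 by simp
  qed
qed simp

lemma f_PC: assumes "QC m n A j B"
  shows "PC m n (j + length B) A (j + 1) (filter (\<lambda>x. 0 < x) (map (\<lambda>x. x - 1) B))"
proof -
  define D where "D = filter (\<lambda>x. 0 < x) (map (\<lambda>x. x - 1) B)"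
  have p: "is_partition (A @ j # B)" and s: "sum_list (A @ j # B) = n" and lA: "length A = m + j"
    and j1: "1 \<le> j" and Aj: "\<forall>a\<in>set A. j < a" and Bne: "B \<noteq> []" and lB: "last B = 1"
    and hA: "hd A \<le> j + length B"
    using assms by (auto simp: QC_def)
  have Ane: "A \<noteq> []" using lA j1 by auto
  have sxs: "sorted_wrt (\<ge>) (A @ j # B)" and pos: "\<forall>x\<in>set (A @ j # B). 0 < x"
    using p by (auto simp: is_partition_def)
  have sA: "sorted_wrt (\<ge>) A" and sB: "sorted_wrt (\<ge>) B" and Bj: "\<forall>b\<in>set B. b \<le> j"
    using sxs by (auto simp: sorted_wrt_append)
  have posB: "\<forall>x\<in>set B. 0 < x" using pos by simp
  have sD: "sorted_wrt (\<ge>) D" unfolding D_def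
    by (rule sorted_wrt_filter) (use sB in \<open>auto simp: sorted_wrt_map elim: sorted_wrt_mono_rel[rotated]\<close>)
  have Dj: "\<forall>d\<in>set D. d + 2 \<le> j + 1" using Bj by (auto simp: D_def)
  have posD: "\<forall>d\<in>set D. 0 < d" by (simp add: D_def)
  have lD: "length D < length B"
  proof -
    have "last B \<in> set B" using Bne by simp
    then have "\<exists>x\<in>set (map (\<lambda>x. x - 1) B). \<not> 0 < x" using lB by force
    then show ?thesis unfolding D_def by (metis length_filter_less length_map)
  qed
  have hAmax: "\<forall>a\<in>set A. a \<le> j + length B" using sorted_hd_max[OF sA] hA by fastforce
  have DA: "\<forall>a\<in>set A. \<forall>d\<in>set D. d \<le> a"
  proof (intro ballI)
    fix a d assume "a \<in> set A" "d \<in> set D"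
    then show "d \<le> a" using Dj Aj by fastforce
  qed
  have Dc: "\<forall>d\<in>set D. d \<le> j + length B" using Dj by fastforce
  have posA: "\<forall>x\<in>set A. 0 < x" using pos by simp
  have part: "is_partition ((j + length B) # A @ D)"
    unfolding is_partition_def using sA sD DA hAmax Dc posA posD j1
    by (auto simp: sorted_wrt_append)
  have sum: "sum_list ((j + length B) # A @ D) = n"
    using s sum_dec[OF posB] by (simp add: D_def)
  have lst: "j + 1 \<le> last ((j + length B) # A)" using Ane Aj by (simp add: Suc_le_eq)
  show ?thesis unfolding D_def[symmetric] PC_def
    using part sum lA lst Dj lD j1 by simp
qed

lemma srep: "sorted_wrt (\<ge>) (replicate k (x::nat))"
  by (induction k) auto

lemma g_QC: assumes "PC m n c C j D"
  shows "QC m n C (j - 1) (map Suc D @ replicate (c - j - length D + 1) 1)"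
proof -
  have p: "is_partition (c # C @ D)" and s: "sum_list (c # C @ D) = n" and lC: "Suc (length C) = m + j"
    and j2: "2 \<le> j" and lst: "j \<le> last (c # C)" and Dj: "\<forall>d\<in>set D. d + 2 \<le> j"
    and lD: "length D + j \<le> c"
    using assms by (auto simp: PC_def)
  have Cne: "C \<noteq> []" using lC j2 by auto
  have sxs: "sorted_wrt (\<ge>) (c # C @ D)" and pos: "\<forall>x\<in>set (c # C @ D). 0 < x"
    using p by (auto simp: is_partition_def)
  have scC: "sorted_wrt (\<ge>) (c # C)" and sD: "sorted_wrt (\<ge>) D"
    using sxs by (auto simp: sorted_wrt_append)
  have Cj: "\<forall>a\<in>set C. j \<le> a" using sorted_last_min[OF scC] lst by fastforce
  have Cc: "\<forall>a\<in>set C. a \<le> c" using scC by simp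
  have sC: "sorted_wrt (\<ge>) C" using scC by simp
  have posC: "\<forall>x\<in>set C. 0 < x" using pos by simp
  have CB: "\<forall>a\<in>set C. \<forall>b\<in>set (map Suc D @ replicate (c - j - length D + 1) 1). b \<le> a"
  proof (intro ballI)
    fix a b assume a: "a \<in> set C" and b: "b \<in> set (map Suc D @ replicate (c - j - length D + 1) 1)"
    have "b \<le> j - 1" using b Dj j2 by (auto split: if_splits)
    then show "b \<le> a" using Cj a by fastforce
  qed
  have Cj1: "\<forall>a\<in>set C. j - 1 \<le> a" using Cj by fastforce
  have Bj1: "\<forall>b\<in>set (map Suc D @ replicate (c - j - length D + 1) 1). b \<le> j - 1"
    using Dj j2 by (auto split: if_splits)
  have sB': "sorted_wrt (\<ge>) (map Suc D @ replicate (c - j - length D + 1) 1)"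
    using sD srep by (auto simp: sorted_wrt_append sorted_wrt_map)
  have part: "is_partition (C @ (j - 1) # map Suc D @ replicate (c - j - length D + 1) 1)"
    unfolding is_partition_def
  proof
    show "sorted_wrt (\<ge>) (C @ (j - 1) # map Suc D @ replicate (c - j - length D + 1) 1)"
      using sC sB' CB Cj1 Bj1 by (simp add: sorted_wrt_append)
    show "\<forall>x\<in>set (C @ (j - 1) # map Suc D @ replicate (c - j - length D + 1) 1). 0 < x"
      using posC j2 by auto
  qed
  have sum: "sum_list (C @ (j - 1) # map Suc D @ replicate (c - j - length D + 1) 1) = n"
    using s lD j2 by (simp add: sum_list_Suc sum_list_replicate)
  have hC: "hd C \<le> j - 1 + length (map Suc D @ replicate (c - j - length D + 1) 1)"
    using Cc Cne lD j2 by simp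
  show ?thesis unfolding QC_def
    using part sum lC j2 Cj hC by auto
qed

lemma gf: assumes "QC m n A j B" shows "gmap m (fmap m (A @ j # B)) = A @ j # B"
proof -
  have sB: "sorted_wrt (\<ge>) B" and posB: "\<forall>x\<in>set B. 0 < x"
    using assms by (auto simp: QC_def is_partition_def sorted_wrt_append)
  have lD: "length (filter (\<lambda>x. 0 < x) (map (\<lambda>x. x - 1) B)) \<le> length B"
    by (metis length_filter_le length_map)
  define D where "D = filter (\<lambda>x. 0 < x) (map (\<lambda>x. x - 1) B)"
  have pc: "PC m n (j + length B) A (j + 1) D" using f_PC[OF assms] by (simp add: D_def)
  then have "length D + (j + 1) \<le> j + length B" by (simp add: PC_def)
  then have eq: "(j + length B) - (j + 1) - length D + 1 = length B - length D" by arith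
  have "gmap m (fmap m (A @ j # B)) = gmap m ((j + length B) # A @ D)"
    using f_eval[OF assms] by (simp add: D_def)
  also have "\<dots> = A @ (j + 1 - 1) # map Suc D @ replicate ((j + length B) - (j + 1) - length D + 1) 1"
    by (rule g_eval[OF pc])
  also have "\<dots> = A @ j # (map Suc D @ replicate (length B - length D) 1)"
    by (simp only: eq) simp
  also have "\<dots> = A @ j # B" using B_recon[OF sB posB] by (simp add: D_def)
  finally show ?thesis .
qed

lemma fg: assumes "PC m n c C j D" shows "fmap m (gmap m (c # C @ D)) = c # C @ D"
proof -
  have posD: "\<forall>x\<in>set D. 0 < x" and lD: "length D + j \<le> c" and j2: "2 \<le> j"
    using assms by (auto simp: PC_def is_partition_def)
  have "filter (\<lambda>x. 0 < x) (map (\<lambda>x. x - 1) (map Suc D @ replicate (c - j - length D + 1) 1)) = D"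
    using posD by (simp add: comp_def)
  then show ?thesis
    using g_eval[OF assms] f_eval[OF g_QC[OF assms]] lD j2 by simp
qed

theorem lemma4p3:
  fixes m n :: nat
  assumes "1 \<le> n"
  shows "\<exists>f. bij_betw f (Q3 m n) (P3 m n)"
proof (intro exI bij_betw_byWitness[where f' = "gmap m"] ballI subsetI)
  fix xs assume "xs \<in> Q3 m n"
  then obtain A j B where "xs = A @ j # B" "QC m n A j B" using Q3_QC by blast
  then show "gmap m (fmap m xs) = xs" using gf by simp
next
  fix ys assume "ys \<in> P3 m n"
  then obtain c C j D where "ys = c # C @ D" "PC m n c C j D" using P3_PC by blast
  then show "fmap m (gmap m ys) = ys" using fg by simp
next
  fix y assume "y \<in> fmap m ` Q3 m n"
  then obtain xs where "xs \<in> Q3 m n" "y = fmap m xs" by blast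
  then obtain A j B where "xs = A @ j # B" "QC m n A j B" using Q3_QC by blast
  then show "y \<in> P3 m n" using f_eval PC_P3 f_PC \<open>y = fmap m xs\<close> by metis
next
  fix x assume "x \<in> gmap m ` P3 m n"
  then obtain ys where "ys \<in> P3 m n" "x = gmap m ys" by blast
  then obtain c C j D where "ys = c # C @ D" "PC m n c C j D" using P3_PC by blast
  then show "x \<in> Q3 m n" using g_eval QC_Q3 g_QC \<open>x = gmap m ys\<close> by metis
qed

end
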